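(* Let $\bm{\mu}\in X^{\mathcal{L}(\mathcal{T})}$ with $V_{s_0}(\bm{\mu})\neq\theta$. For every leaf $\ell\in\mathcal{L}(\mathcal{T})$ with $w^{s_0}_\ell(\bm{\mu})>0$, we have $\mu_\ell>\theta$ if $a_{s_0}(\bm{\mu})=$'win' and $\mu_\ell<\theta$ if $a_{s_0}(\bm{\mu})=$'lose'.
   Context: $\mathcal{T}$ is a finite rooted tree with node set $S$, root $s_0$, children $\mathcal{C}(s)$, leaves $\mathcal{L}(\mathcal{T})$, and $\mathcal{D}(s)$ the leaves descending from $s$; internal labels $L(s)\in\{\text{MAX},\text{MIN}\}$. $X\subseteq\mathbb{R}$ mean-parameter set of a one-parameter exponential family; $d(x,y)$ KL divergence between members with means $x,y$ (so $d(x,y)\ge0$ with equality iff $x=y$); threshold $\theta\in X$. $V_s(\bm{\mu})=\mu_s$ at leaves, max/min of children's values at MAX/MIN nodes; $a_s(\bm{\mu})=$'win' iff $V_s(\bm{\mu})\ge\theta$. Recursive weights: $a^*=a_{s_0}(\bm{\mu})$; $P=$MAX, $Q=$MIN if $a^*=$'win', swapped if 'lose'. Leaf $s$: $w^s_s=1$, $d_s=d(\mu_s,\theta)$ if ($a^*=$'win', $\mu_s\ge\theta$) or ($a^*=$'lose', $\mu_s<\theta$), else $0$. $L(s)=P$: $d_s=\max_c d_c$, fixed $c^*(s)\in\arg\max_c d_c$, and if $d_s>0$: $w^s_\ell=w^{c^*(s)}_\ell$ for $\ell\in\mathcal{D}(c^*(s))$, $0$ for other $\ell\in\mathcal{D}(s)$.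 $L(s)=Q$ and all $d_c>0$: $d_s=(\sum_c1/d_c)^{-1}$, $w^s_\ell=\frac{w^c_\ell/d_c}{\sum_{c'}1/d_{c'}}$ for $\ell\in\mathcal{D}(c)$. $L(s)=Q$ otherwise: $d_s=0$. Internal $s$ with $d_s=0$: $\bm{w}^s$ a fixed arbitrary probability vector on $\mathcal{D}(s)$. *)

theory Defs
  imports Complex_Main
begin

text \<open>A node of the tree
  is identified with the subtree rooted at it.\<close>

datatype player = MaxNode | MinNode

datatype 'a gtree = Leaf 'a | Node player "'a gtree list"

fun leaves :: "'a gtree \<Rightarrow> 'a list" where
  "leaves (Leaf a) = [a]"
| "leaves (Node L cs) = concat (map leaves cs)"

fun subtrees :: "'a gtree \<Rightarrow> 'a gtree set" where
  "subtrees (Leaf a) = {Leaf a}"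
| "subtrees (Node L cs) = insert (Node L cs) (\<Union>c\<in>set cs. subtrees c)"

definition wf_gtree :: "'a gtree \<Rightarrow> bool" where
  "wf_gtree t \<longleftrightarrow> distinct (leaves t) \<and> (\<forall>L cs. Node L cs \<in> subtrees t \<longrightarrow> cs \<noteq> [])"

fun V :: "('a \<Rightarrow> real) \<Rightarrow> 'a gtree \<Rightarrow> real" where
  "V \<mu> (Leaf a) = \<mu> a"
| "V \<mu> (Node MaxNode cs) = Max (set (map (V \<mu>) cs))"
| "V \<mu> (Node MinNode cs) = Min (set (map (V \<mu>) cs))"

text \<open>P = MAX (MaxNode) if the root answer is 'win', P = MinNode if it is 'lose'.\<close>
definition is_P :: "bool \<Rightarrow> player \<Rightarrow> bool" where
  "is_P win L \<longleftrightarrow> (if win then L = MaxNode else L = MinNode)"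

text \<open>The recursive quantity d_s ; win encodes a* = 'win'.\<close>
fun dv :: "(real \<Rightarrow> real \<Rightarrow> real) \<Rightarrow> real \<Rightarrow> ('a \<Rightarrow> real) \<Rightarrow> bool \<Rightarrow> 'a gtree \<Rightarrow> real" where
  "dv d \<theta> \<mu> win (Leaf a) =
     (if (win \<and> \<theta> \<le> \<mu> a) \<or> (\<not> win \<and> \<mu> a < \<theta>) then d (\<mu> a) \<theta> else 0)"
| "dv d \<theta> \<mu> win (Node L cs) =
     (if is_P win L then Max (set (map (dv d \<theta> \<mu> win) cs))
      else if (\<forall>c\<in>set cs. 0 < dv d \<theta> \<mu> win c)
           then 1 / (\<Sum>c\<leftarrow>cs. 1 / dv d \<theta> \<mu> win c)
           else 0)"

text \<open>Weights w^s_l (extended by 0 outside the leaves D(s)).  cst is the fixed choice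
  c*(s) and pv the fixed arbitrary probability vector used when d_s = 0.\<close>
fun w :: "(real \<Rightarrow> real \<Rightarrow> real) \<Rightarrow> real \<Rightarrow> ('a \<Rightarrow> real) \<Rightarrow> bool
          \<Rightarrow> ('a gtree \<Rightarrow> 'a gtree) \<Rightarrow> ('a gtree \<Rightarrow> 'a \<Rightarrow> real) \<Rightarrow> 'a gtree \<Rightarrow> 'a \<Rightarrow> real" where
  "w d \<theta> \<mu> win cst pv (Leaf a) l = (if l = a then 1 else 0)"
| "w d \<theta> \<mu> win cst pv (Node L cs) l =
     (if dv d \<theta> \<mu> win (Node L cs) = 0
      then (if l \<in> set (leaves (Node L cs)) then pv (Node L cs) l else 0)
      else if is_P win L
      then (\<Sum>c\<leftarrow>cs. if c = cst (Node L cs) \<and> l \<in> set (leaves c)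
                       then w d \<theta> \<mu> win cst pv c l else 0)
      else (\<Sum>c\<leftarrow>cs. if l \<in> set (leaves c)
                       then (w d \<theta> \<mu> win cst pv c l / dv d \<theta> \<mu> win c)
                            / (\<Sum>c'\<leftarrow>cs. 1 / dv d \<theta> \<mu> win c')
                       else 0))"

end

theory Submission
  imports Defs
begin


lemma sum_list_pos_ex:
  fixes f :: "'b \<Rightarrow> real"
  shows "0 < sum_list (map f xs) \<Longrightarrow> \<exists>x\<in>set xs. 0 < f x"
  by (induction xs) (auto, smt (verit))

lemma sum_list_pos:
  fixes f :: "'b \<Rightarrow> real"
  shows "xs \<noteq> [] \<Longrightarrow> \<forall>x\<in>set xs. 0 < f x \<Longrightarrow> 0 < sum_list (map f xs)"
proof (induction xs)
  case Nil then show ?case by simp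
next
  case (Cons a xs)
  then show ?case
    by (cases "xs = []") (auto intro: add_pos_pos)
qed

lemma dv_pos:
  assumes "\<forall>L cs. Node L cs \<in> subtrees s \<longrightarrow> cs \<noteq> []"
    and "\<forall>l\<in>set (leaves s). \<mu> l \<in> X"
    and d_div: "\<forall>x\<in>X. \<forall>y\<in>X. 0 \<le> d x y \<and> (d x y = 0 \<longleftrightarrow> x = y)"
    and theta_X: "\<theta> \<in> X"
    and "if win then \<theta> < V \<mu> s else V \<mu> s < \<theta>"
  shows "0 < dv d \<theta> \<mu> win s"
  using assms
proof (induction s)
  case (Leaf a)
  then have "\<mu> a \<in> X" "\<mu> a \<noteq> \<theta>" by (auto split: if_splits)
  then have "0 < d (\<mu> a) \<theta>" using d_div theta_X
    by (metis order_le_less)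
  then show ?case using Leaf.prems(5) by (auto split: if_splits)
next
  case (Node L cs)
  have ne: "cs \<noteq> []" using Node.prems(1) by auto
  have IH: "\<And>c. c \<in> set cs \<Longrightarrow> (if win then \<theta> < V \<mu> c else V \<mu> c < \<theta>) \<Longrightarrow> 0 < dv d \<theta> \<mu> win c"
  proof -
    fix c assume c: "c \<in> set cs" and h: "if win then \<theta> < V \<mu> c else V \<mu> c < \<theta>"
    show "0 < dv d \<theta> \<mu> win c"
      apply (rule Node.IH[OF c])
      using Node.prems c h by auto
  qed
  have fin: "finite (set (map (V \<mu>) cs))" "set (map (V \<mu>) cs) \<noteq> {}" using ne by auto
  have finD: "finite (set (map (dv d \<theta> \<mu> win) cs))" "set (map (dv d \<theta> \<mu> win) cs) \<noteq> {}" using ne by auto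
  show ?case
  proof (cases "is_P win L")
    case True
    have "\<exists>c\<in>set cs. V \<mu> c = V \<mu> (Node L cs)"
      using True Max_in[OF fin] Min_in[OF fin] by (cases win; cases L; auto simp: is_P_def)
    then obtain c where c: "c \<in> set cs" "V \<mu> c = V \<mu> (Node L cs)" by blast
    have "0 < dv d \<theta> \<mu> win c" using IH[OF c(1)] c(2) Node.prems(5) by simp
    moreover have "dv d \<theta> \<mu> win c \<le> Max (set (map (dv d \<theta> \<mu> win) cs))"
      using c(1) finD by (auto intro: Max_ge)
    ultimately show ?thesis using True by simp
  next
    case False
    have all: "\<forall>c\<in>set cs. 0 < dv d \<theta> \<mu> win c"
    proof
      fix c assume c: "c \<in> set cs"
      have "if win then V \<mu> (Node L cs) \<le> V \<mu> c else V \<mu> c \<le> V \<mu> (Node L cs)"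
        using False c fin by (cases win; cases L; auto simp: is_P_def intro: Max_ge Min_le)
      then show "0 < dv d \<theta> \<mu> win c" using IH[OF c] Node.prems(5)
        by (cases win) auto
    qed
    have "0 < (\<Sum>c\<leftarrow>cs. 1 / dv d \<theta> \<mu> win c)"
      using sum_list_pos[OF ne, of "\<lambda>c. 1 / dv d \<theta> \<mu> win c"] all by auto
    then show ?thesis using False all by simp
  qed
qed

lemma w_pos:
  assumes "\<forall>l\<in>set (leaves s). \<mu> l \<in> X"
    and d_div: "\<forall>x\<in>X. \<forall>y\<in>X. 0 \<le> d x y \<and> (d x y = 0 \<longleftrightarrow> x = y)"
    and theta_X: "\<theta> \<in> X"
    and "\<forall>L cs. Node L cs \<in> subtrees s \<longrightarrow> is_P win L \<longrightarrow>
          cst (Node L cs) \<in> set cs \<and>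
          dv d \<theta> \<mu> win (cst (Node L cs)) = dv d \<theta> \<mu> win (Node L cs)"
    and "0 < dv d \<theta> \<mu> win s"
    and "0 < w d \<theta> \<mu> win cst pv s l"
  shows "if win then \<theta> < \<mu> l else \<mu> l < \<theta>"
  using assms
proof (induction s)
  case (Leaf a)
  then have la: "l = a" by (auto split: if_splits)
  have "d (\<mu> a) \<theta> \<noteq> 0" "(win \<and> \<theta> \<le> \<mu> a) \<or> (\<not> win \<and> \<mu> a < \<theta>)"
    using Leaf.prems(5) by (auto split: if_splits)
  moreover have "\<mu> a \<in> X" using Leaf.prems(1) by simp
  ultimately have "\<mu> a \<noteq> \<theta>" "(win \<and> \<theta> \<le> \<mu> a) \<or> (\<not> win \<and> \<mu> a < \<theta>)"
    using d_div theta_X by auto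
  then show ?case using la by auto
next
  case (Node L cs)
  have IH: "\<And>c. c \<in> set cs \<Longrightarrow> 0 < dv d \<theta> \<mu> win c \<Longrightarrow> 0 < w d \<theta> \<mu> win cst pv c l \<Longrightarrow> ?case"
  proof -
    fix c assume c: "c \<in> set cs" and h1: "0 < dv d \<theta> \<mu> win c" and h2: "0 < w d \<theta> \<mu> win cst pv c l"
    have sub: "Node La csa \<in> subtrees c \<Longrightarrow> Node La csa \<in> subtrees (Node L cs)" for La csa
      using c by auto
    have "\<forall>La csa. Node La csa \<in> subtrees c \<longrightarrow> is_P win La \<longrightarrow>
          cst (Node La csa) \<in> set csa \<and>
          dv d \<theta> \<mu> win (cst (Node La csa)) = dv d \<theta> \<mu> win (Node La csa)"
      using Node.prems(4) sub by blast
    then show ?case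
      apply (intro Node.IH[OF c])
      using Node.prems(1-3) c h1 h2 by auto
  qed
  have nz: "dv d \<theta> \<mu> win (Node L cs) \<noteq> 0" using Node.prems(5) by simp
  show ?case
  proof (cases "is_P win L")
    case True
    have cs: "cst (Node L cs) \<in> set cs" "dv d \<theta> \<mu> win (cst (Node L cs)) = dv d \<theta> \<mu> win (Node L cs)"
      using Node.prems(4) True by auto
    have "0 < (\<Sum>c\<leftarrow>cs. if c = cst (Node L cs) \<and> l \<in> set (leaves c)
                       then w d \<theta> \<mu> win cst pv c l else 0)"
      using Node.prems(6) nz True by simp
    from sum_list_pos_ex[OF this] obtain c where c: "c \<in> set cs"
      "0 < (if c = cst (Node L cs) \<and> l \<in> set (leaves c) then w d \<theta> \<mu> win cst pv c l else 0)"
      by blast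
    then have "c = cst (Node L cs)" "0 < w d \<theta> \<mu> win cst pv c l" by (auto split: if_splits)
    then show ?thesis using IH[OF c(1)] cs Node.prems(5) by simp
  next
    case False
    have all: "\<forall>c\<in>set cs. 0 < dv d \<theta> \<mu> win c"
      using nz False by (auto split: if_splits)
    define S where "S = (\<Sum>c'\<leftarrow>cs. 1 / dv d \<theta> \<mu> win c')"
    have "0 < 1 / S" using Node.prems(5) False all by (simp add: S_def)
    then have Sp: "0 < S" by (simp add: zero_less_divide_iff)
    have "0 < (\<Sum>c\<leftarrow>cs. if l \<in> set (leaves c)
                       then (w d \<theta> \<mu> win cst pv c l / dv d \<theta> \<mu> win c) / S
                       else 0)"
      unfolding S_def using Node.prems(6) nz False by simp
    from sum_list_pos_ex[OF this] obtain c where c: "c \<in> set cs"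
      "0 < (if l \<in> set (leaves c) then (w d \<theta> \<mu> win cst pv c l / dv d \<theta> \<mu> win c) / S else 0)"
      by blast
    then have "0 < (w d \<theta> \<mu> win cst pv c l / dv d \<theta> \<mu> win c) / S" by (auto split: if_splits)
    then have "0 < w d \<theta> \<mu> win cst pv c l" using Sp all c(1)
      by (simp add: zero_less_divide_iff) (meson mult_pos_pos not_less_iff_gr_or_eq)
    then show ?thesis using IH[OF c(1)] all c(1) by simp
  qed
qed

theorem proposition1:
  fixes t :: "'a gtree" and \<mu> :: "'a \<Rightarrow> real" and X :: "real set"
    and d :: "real \<Rightarrow> real \<Rightarrow> real" and \<theta> :: real and win :: bool
    and cst :: "'a gtree \<Rightarrow> 'a gtree" and pv :: "'a gtree \<Rightarrow> 'a \<Rightarrow> real"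
  assumes wf: "wf_gtree t"
    and d_div: "\<forall>x\<in>X. \<forall>y\<in>X. 0 \<le> d x y \<and> (d x y = 0 \<longleftrightarrow> x = y)"
    and theta_X: "\<theta> \<in> X"
    and mu_X: "\<forall>l\<in>set (leaves t). \<mu> l \<in> X"
    and V_ne: "V \<mu> t \<noteq> \<theta>"
    and win_def: "win \<longleftrightarrow> \<theta> \<le> V \<mu> t"
    and cst_argmax: "\<forall>L cs. Node L cs \<in> subtrees t \<longrightarrow> is_P win L \<longrightarrow>
          cst (Node L cs) \<in> set cs \<and>
          dv d \<theta> \<mu> win (cst (Node L cs)) = dv d \<theta> \<mu> win (Node L cs)"
    and pv_prob: "\<forall>L cs. Node L cs \<in> subtrees t \<longrightarrow>
          (\<forall>l\<in>set (leaves (Node L cs)). 0 \<le> pv (Node L cs) l) \<and>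
          (\<Sum>l\<leftarrow>leaves (Node L cs). pv (Node L cs) l) = 1"
  shows "\<forall>l\<in>set (leaves t). 0 < w d \<theta> \<mu> win cst pv t l \<longrightarrow>
           (if win then \<theta> < \<mu> l else \<mu> l < \<theta>)"
proof -
  have "if win then \<theta> < V \<mu> t else V \<mu> t < \<theta>" using V_ne win_def by auto
  then have "0 < dv d \<theta> \<mu> win t"
    using dv_pos[OF _ mu_X d_div theta_X] wf unfolding wf_gtree_def by blast
  then show ?thesis
    using w_pos[OF mu_X d_div theta_X cst_argmax] by blast
qed

end
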